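(* Let $\lambda$ be a well-behaved hypergraph width measure, $k$ an integer, and $H$ a hypergraph with $\lambda\text{-}tw(H)\le k$. Then every clique $C$ of $\underline{\underline{H}}$ satisfies $\lambda_H(C)\le k$. Furthermore, every $(A,B)$-separator $S$ of $H$ with $\lambda_H(S)\le k$ is an $(A,B)$-separator in $\underline{\underline{H}}$.
   Context: A hypergraph $H$ has finite vertex set $V(H)$ and edge set $E(H)$ of subsets of $V(H)$; $||H||$ is the size of its encoding. The Gaifman graph $\underline{H}$ is the graph on $V(H)$ with two distinct vertices adjacent iff they lie in a common edge; $N_G(u)$ is the neighbourhood of $u$ in a graph $G$. The graph $\underline{\underline{H}}$ (depending on $k$) is obtained from $G_0=\underline{H}$ by repeatedly adding to the current graph $G_i$ an edge $uv$ between non-adjacent vertices with $\lambda_H(N_{G_i}(u)\cap N_{G_i}(v))>k$, until no such pair remains (in any order, e.g. lexicographically first). A set $S$ is an $(A,B)$-separator in a graph $G$ (of $H$: in $\underline{H}$) if $A\cap B\subseteq S$ and every path in $G$ from a vertex of $A$ to a vertex of $B$ contains a vertex of $S$. A tree decomposition of $H$ is a tree $T$ with bags $B_t\subseteq V(H)$ such that nodes containing a given vertex form a connected subtree and every edge of $\underline{H}$ is inside some bag. A width measure $\lambda$ assigns to each hypergraph $H$ a real function $\lambda_H$ on subsets of $V(H)$; $\lambda\text{-}tw(H)$ is the minimum over tree decompositions of $\max_t\lambda_H(B_t)$. $\lambda$ is well-behaved if: (1) $\lambda_H(\{x\})\ge1$; (2) $\lambda_H(S\cup T)\le\lambda_H(S)+\lambda_H(T)$;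 (3) equality in (2) for disjoint $S,T$ with no edge of $\underline{H}$ between them; (4) $\lambda_F(S)\le\lambda_H(T)$ whenever $V(H)\subseteq V(F)$, $E(H)\subseteq E(F)$ and $S\subseteq T$; (5) $\lambda_H(S)\le k$ is decidable in time $||H||^{O(k)}$. *)

theory Defs
  imports Complex_Main
begin

type_synonym 'a hypergraph = "'a set \<times> 'a set set"

definition hv :: "'a hypergraph \<Rightarrow> 'a set" where "hv H = fst H"
definition he :: "'a hypergraph \<Rightarrow> 'a set set" where "he H = snd H"

definition hypergraph :: "'a hypergraph \<Rightarrow> bool" where
  "hypergraph H \<longleftrightarrow> finite (hv H) \<and> (\<forall>e\<in>he H. e \<subseteq> hv H)"

text \<open>Simple graphs on a vertex set are represented by sets of 2-element sets.\<close>
definition gaifman :: "'a hypergraph \<Rightarrow> 'a set set" where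
  "gaifman H = {{u, v} | u v. u \<noteq> v \<and> (\<exists>e\<in>he H. u \<in> e \<and> v \<in> e)}"

definition nbh :: "'a set set \<Rightarrow> 'a \<Rightarrow> 'a set" where
  "nbh G u = {v. {u, v} \<in> G \<and> v \<noteq> u}"

definition is_path :: "'a set \<Rightarrow> 'a set set \<Rightarrow> 'a list \<Rightarrow> bool" where
  "is_path V G xs \<longleftrightarrow> xs \<noteq> [] \<and> set xs \<subseteq> V \<and>
     (\<forall>i. Suc i < length xs \<longrightarrow> xs ! i \<noteq> xs ! Suc i \<and> {xs ! i, xs ! Suc i} \<in> G)"

definition separator :: "'a set \<Rightarrow> 'a set set \<Rightarrow> 'a set \<Rightarrow> 'a set \<Rightarrow> 'a set \<Rightarrow> bool" where
  "separator V G A B S \<longleftrightarrow> A \<inter> B \<subseteq> S \<and>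
     (\<forall>xs. is_path V G xs \<and> hd xs \<in> A \<and> last xs \<in> B \<longrightarrow> set xs \<inter> S \<noteq> {})"

definition is_clique :: "'a set \<Rightarrow> 'a set set \<Rightarrow> 'a set \<Rightarrow> bool" where
  "is_clique V G C \<longleftrightarrow> C \<subseteq> V \<and> (\<forall>u\<in>C. \<forall>v\<in>C. u \<noteq> v \<longrightarrow> {u, v} \<in> G)"

definition connected_graph :: "'b set \<Rightarrow> 'b set set \<Rightarrow> bool" where
  "connected_graph N TE \<longleftrightarrow>
     (\<forall>u\<in>N. \<forall>v\<in>N. (u, v) \<in> {(x, y). x \<in> N \<and> y \<in> N \<and> {x, y} \<in> TE}\<^sup>*)"

text \<open>A (finite) tree: nonempty, connected, and minimally connected (i.e. acyclic).\<close>
definition is_tree :: "nat set \<Rightarrow> nat set set \<Rightarrow> bool" where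
  "is_tree N TE \<longleftrightarrow> finite N \<and> N \<noteq> {} \<and>
     (\<forall>e\<in>TE. e \<subseteq> N \<and> card e = 2) \<and>
     connected_graph N TE \<and> (\<forall>e\<in>TE. \<not> connected_graph N (TE - {e}))"

definition tree_decomposition :: "'a hypergraph \<Rightarrow> nat set \<Rightarrow> nat set set \<Rightarrow> (nat \<Rightarrow> 'a set) \<Rightarrow> bool" where
  "tree_decomposition H N TE bag \<longleftrightarrow> is_tree N TE \<and>
     (\<forall>t\<in>N. bag t \<subseteq> hv H) \<and>
     (\<forall>x\<in>hv H. {t\<in>N. x \<in> bag t} \<noteq> {} \<and>
        connected_graph {t\<in>N. x \<in> bag t} {e\<in>TE. e \<subseteq> {t\<in>N. x \<in> bag t}}) \<and>
     (\<forall>e\<in>gaifman H. \<exists>t\<in>N. e \<subseteq> bag t)"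

type_synonym 'a width_measure = "'a hypergraph \<Rightarrow> 'a set \<Rightarrow> real"

definition lambda_tw :: "'a width_measure \<Rightarrow> 'a hypergraph \<Rightarrow> real" where
  "lambda_tw lam H = Inf {w. \<exists>N TE bag. tree_decomposition H N TE bag \<and> w = Max ((\<lambda>t. lam H (bag t)) ` N)}"

text \<open>Well-behavedness, conditions (1)-(4); (5) is an algorithmic condition.\<close>
definition well_behaved :: "'a width_measure \<Rightarrow> bool" where
  "well_behaved lam \<longleftrightarrow>
    (\<forall>H x. hypergraph H \<and> x \<in> hv H \<longrightarrow> lam H {x} \<ge> 1) \<and>
    (\<forall>H S T. hypergraph H \<and> S \<subseteq> hv H \<and> T \<subseteq> hv H \<longrightarrow> lam H (S \<union> T) \<le> lam H S + lam H T) \<and>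
    (\<forall>H S T. hypergraph H \<and> S \<subseteq> hv H \<and> T \<subseteq> hv H \<and> S \<inter> T = {} \<and>
        (\<forall>u\<in>S. \<forall>v\<in>T. {u, v} \<notin> gaifman H) \<longrightarrow> lam H (S \<union> T) = lam H S + lam H T) \<and>
    (\<forall>H F S T. hypergraph H \<and> hypergraph F \<and> hv H \<subseteq> hv F \<and> he H \<subseteq> he F \<and>
        S \<subseteq> T \<and> T \<subseteq> hv H \<longrightarrow> lam F S \<le> lam H T)"

text \<open>One step of the saturation process defining the graph underline-underline H.\<close>
definition closure_step :: "'a width_measure \<Rightarrow> int \<Rightarrow> 'a hypergraph \<Rightarrow> 'a set set \<Rightarrow> 'a set set \<Rightarrow> bool" where
  "closure_step lam k H G G' \<longleftrightarrow> (\<exists>u v. u \<in> hv H \<and> v \<in> hv H \<and> u \<noteq> v \<and> {u, v} \<notin> G \<and>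
      lam H (nbh G u \<inter> nbh G v) > of_int k \<and> G' = insert {u, v} G)"

text \<open>G is a result of the saturation process (for any order of adding edges).\<close>
definition is_closure :: "'a width_measure \<Rightarrow> int \<Rightarrow> 'a hypergraph \<Rightarrow> 'a set set \<Rightarrow> bool" where
  "is_closure lam k H G \<longleftrightarrow> (closure_step lam k H)\<^sup>*\<^sup>* (gaifman H) G \<and>
      (\<nexists>G'. closure_step lam k H G G')"

end

theory Submission
  imports Defs
begin


abbreviation rel :: "'b set \<Rightarrow> 'b set set \<Rightarrow> ('b \<times> 'b) set" where
  "rel N E \<equiv> {(x, y). x \<in> N \<and> y \<in> N \<and> {x, y} \<in> E}"

definition side :: "nat set \<Rightarrow> nat set set \<Rightarrow> nat \<Rightarrow> nat \<Rightarrow> nat set" where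
  "side N TE s t = {x. (t, x) \<in> (rel N (TE - {{s, t}}))\<^sup>*}"

abbreviation conn :: "nat set set \<Rightarrow> nat set \<Rightarrow> bool" where
  "conn TE X \<equiv> connected_graph X {e\<in>TE. e \<subseteq> X}"

lemma rel_sym: "(x, y) \<in> (rel N E)\<^sup>* \<Longrightarrow> (y, x) \<in> (rel N E)\<^sup>*"
proof (induction rule: rtrancl_induct)
  case base then show ?case by simp
next
  case (step y z)
  then have "(z, y) \<in> rel N E" by (auto simp: insert_commute)
  then show ?case using step(3) by (rule converse_rtrancl_into_rtrancl)
qed

lemma side_swap: "side N TE t s = {x. (s, x) \<in> (rel N (TE - {{s, t}}))\<^sup>*}"
  unfolding side_def by (simp add: insert_commute)

lemma tree_edge: "is_tree N TE \<Longrightarrow> {s, t} \<in> TE \<Longrightarrow> s \<noteq> t \<and> s \<in> N \<and> t \<in> N"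
proof -
  assume tr: "is_tree N TE" and e: "{s, t} \<in> TE"
  then have c: "card {s, t} = 2" and sub: "{s, t} \<subseteq> N" unfolding is_tree_def by blast+
  have "s \<noteq> t"
  proof
    assume "s = t"
    then have "card {s, t} = 1" by simp
    then show False using c by simp
  qed
  then show ?thesis using sub by blast
qed

lemma self_side: "t \<in> N \<Longrightarrow> t \<in> side N TE s t"
  unfolding side_def by simp

lemma side_sub: "side N TE s t \<subseteq> insert t N"
proof
  fix x assume "x \<in> side N TE s t"
  then have "(t, x) \<in> (rel N (TE - {{s, t}}))\<^sup>*" by (simp add: side_def)
  then show "x \<in> insert t N" by (induction rule: rtrancl_induct) auto
qed

lemma T1:
  assumes tr: "is_tree N TE" and e: "{s, t} \<in> TE" and x: "x \<in> N"
  shows "x \<in> side N TE s t \<or> x \<in> side N TE t s"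
proof -
  have st: "s \<in> N" "t \<in> N" using tree_edge[OF tr e] by auto
  have "(s, x) \<in> (rel N TE)\<^sup>*" using tr st x unfolding is_tree_def connected_graph_def by blast
  then have "(t, x) \<in> (rel N (TE - {{s, t}}))\<^sup>* \<or> (s, x) \<in> (rel N (TE - {{s, t}}))\<^sup>*"
  proof (induction rule: rtrancl_induct)
    case base then show ?case by simp
  next
    case (step z y)
    show ?case
    proof (cases "{z, y} = {s, t}")
      case True
      then have "y = s \<or> y = t" by (auto simp: doubleton_eq_iff)
      then show ?thesis by auto
    next
      case False
      then have "(z, y) \<in> rel N (TE - {{s, t}})" using step(2) by auto
      then show ?thesis using step(3) by (meson rtrancl_into_rtrancl)
    qed
  qed
  then show ?thesis unfolding side_def[of N TE s t] side_swap[of N TE t s] by simp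
qed

lemma T2:
  assumes tr: "is_tree N TE" and e: "{s, t} \<in> TE"
  shows "side N TE s t \<inter> side N TE t s = {}"
proof (rule ccontr)
  assume "side N TE s t \<inter> side N TE t s \<noteq> {}"
  then obtain x where x1: "(t, x) \<in> (rel N (TE - {{s, t}}))\<^sup>*" and x2: "(s, x) \<in> (rel N (TE - {{s, t}}))\<^sup>*"
    unfolding side_def[of N TE s t] side_swap[of N TE t s] by blast
  have st: "(s, t) \<in> (rel N (TE - {{s, t}}))\<^sup>*" by (rule rtrancl_trans[OF x2 rel_sym[OF x1]])
  have "connected_graph N (TE - {{s, t}})"
    unfolding connected_graph_def
  proof (intro ballI)
    fix u v assume u: "u \<in> N" and v: "v \<in> N"
    have "\<And>y. y \<in> N \<Longrightarrow> (s, y) \<in> (rel N (TE - {{s, t}}))\<^sup>*"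
    proof -
      fix y assume "y \<in> N"
      from T1[OF tr e this] have "(t, y) \<in> (rel N (TE - {{s, t}}))\<^sup>* \<or> (s, y) \<in> (rel N (TE - {{s, t}}))\<^sup>*"
        unfolding side_def[of N TE s t] side_swap[of N TE t s] by simp
      then show "(s, y) \<in> (rel N (TE - {{s, t}}))\<^sup>*"
        using rtrancl_trans[OF st] by blast
    qed
    then have su: "(s, u) \<in> (rel N (TE - {{s, t}}))\<^sup>*" and sv: "(s, v) \<in> (rel N (TE - {{s, t}}))\<^sup>*"
      using u v by auto
    from rel_sym[OF su] sv show "(u, v) \<in> {(x, y). x \<in> N \<and> y \<in> N \<and> {x, y} \<in> TE - {{s, t}}}\<^sup>*" by (rule rtrancl_trans)
  qed
  moreover have "\<forall>e\<in>TE. \<not> connected_graph N (TE - {e})" using tr unfolding is_tree_def by simp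
  ultimately show False using e by blast
qed

lemma T3:
  assumes tr: "is_tree N TE" and e: "{s, t} \<in> TE" and XN: "X \<subseteq> N" and cX: "conn TE X"
    and a: "a \<in> X" "a \<in> side N TE t s" and b: "b \<in> X" "b \<in> side N TE s t"
  shows "s \<in> X \<and> t \<in> X"
proof -
  have "(a, b) \<in> (rel X {e\<in>TE. e \<subseteq> X})\<^sup>*" using cX a b unfolding connected_graph_def by blast
  then have "b \<in> side N TE t s \<or> (s \<in> X \<and> t \<in> X)"
  proof (induction rule: rtrancl_induct)
    case base then show ?case using a by simp
  next
    case (step z y)
    show ?case
    proof (cases "s \<in> X \<and> t \<in> X")
      case True then show ?thesis by simp
    next
      case False
      then have z: "z \<in> side N TE t s" using step(3) by blast
      show ?thesis
      proof (cases "{z, y} = {s, t}")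
        case True
        then show ?thesis using step(2) by (auto simp: doubleton_eq_iff)
      next
        case False
        then have "(z, y) \<in> rel N (TE - {{s, t}})" using step(2) XN by auto
        moreover have "(s, z) \<in> (rel N (TE - {{s, t}}))\<^sup>*" using z by (simp add: side_swap)
        ultimately have "(s, y) \<in> (rel N (TE - {{s, t}}))\<^sup>*" by (meson rtrancl_into_rtrancl)
        then show ?thesis by (simp add: side_swap)
      qed
    qed
  qed
  then show ?thesis using T2[OF tr e] b by blast
qed

lemma T4:
  assumes tr: "is_tree N TE" and XN: "X \<subseteq> N" and cX: "conn TE X" and ne: "X \<noteq> {}"
    and s: "s \<in> N" "s \<notin> X"
  shows "\<exists>t. {s, t} \<in> TE \<and> X \<subseteq> side N TE s t"
proof -
  obtain a where a: "a \<in> X" using ne by blast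
  have "(s, a) \<in> (rel N TE)\<^sup>*" using tr s a XN unfolding is_tree_def connected_graph_def by blast
  then have "a = s \<or> (\<exists>t. {s, t} \<in> TE \<and> a \<in> side N TE s t)"
  proof (induction rule: rtrancl_induct)
    case base then show ?case by simp
  next
    case (step z y)
    have yN: "y \<in> N" and zy: "{z, y} \<in> TE" using step(2) by auto
    from step(3) show ?case
    proof
      assume "z = s"
      then show ?thesis using yN zy self_side by blast
    next
      assume "\<exists>t. {s, t} \<in> TE \<and> z \<in> side N TE s t"
      then obtain t where t: "{s, t} \<in> TE" "z \<in> side N TE s t" by blast
      show ?thesis
      proof (cases "{z, y} = {s, t}")
        case True
        then have "y = s \<or> y = t" by (auto simp: doubleton_eq_iff)
        then show ?thesis using t yN self_side by blast
      next
        case False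
        then have "(z, y) \<in> rel N (TE - {{s, t}})" using step(2) by auto
        then show ?thesis using t by (auto simp: side_def intro: rtrancl_into_rtrancl)
      qed
    qed
  qed
  then obtain t where t: "{s, t} \<in> TE" "a \<in> side N TE s t" using a s by blast
  have "X \<subseteq> side N TE s t"
  proof
    fix b assume b: "b \<in> X"
    show "b \<in> side N TE s t"
    proof (rule ccontr)
      assume "b \<notin> side N TE s t"
      then have "b \<in> side N TE t s" using T1[OF tr t(1)] b XN by blast
      then have "s \<in> X" using T3[OF tr t(1) XN cX b(1) _ a t(2)] by blast
      then show False using s by blast
    qed
  qed
  then show ?thesis using t by blast
qed

lemma T5:
  assumes tr: "is_tree N TE" and e1: "{s, t} \<in> TE" and e2: "{t, r} \<in> TE" and rs: "r \<noteq> s"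
  shows "card (side N TE t r) < card (side N TE s t)"
proof -
  have n1: "s \<noteq> t" "s \<in> N" "t \<in> N" using tree_edge[OF tr e1] by auto
  have n2: "t \<noteq> r" "r \<in> N" using tree_edge[OF tr e2] by auto
  have sub: "side N TE t r \<subseteq> side N TE s t"
  proof
    fix x assume "x \<in> side N TE t r"
    then have "(r, x) \<in> (rel N (TE - {{t, r}}))\<^sup>*" by (simp add: side_def)
    then show "x \<in> side N TE s t"
    proof (induction rule: rtrancl_induct)
      case base
      have "(t, r) \<in> rel N (TE - {{s, t}})" using n1 n2 e2 rs by (auto simp: doubleton_eq_iff)
      then have "(t, r) \<in> (rel N (TE - {{s, t}}))\<^sup>*" by (rule r_into_rtrancl)
      then show ?case by (simp add: side_def)
    next
      case (step z y)
      show ?case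
      proof (cases "{z, y} = {s, t}")
        case False
        then have "(z, y) \<in> rel N (TE - {{s, t}})" using step(2) by auto
        then show ?thesis using step(3) by (auto simp: side_def intro: rtrancl_into_rtrancl)
      next
        case True
        then have "z = s \<or> z = t" by (auto simp: doubleton_eq_iff)
        then show ?thesis
        proof
          assume "z = s"
          then have "z \<in> side N TE t s" using n1 self_side by blast
          then show ?thesis using T2[OF tr e1] step(3) by blast
        next
          assume "z = t"
          then have "t \<in> side N TE t r" using step(1) by (simp add: side_def)
          moreover have "t \<in> side N TE r t" using n1 self_side by blast
          ultimately show ?thesis using T2[OF tr e2] by blast
        qed
      qed
    qed
  qed
  have "t \<in> side N TE s t" using n1 self_side by blast
  moreover have "t \<notin> side N TE t r" using T2[OF tr e2] self_side[OF n1(3)] by blast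
  ultimately have "side N TE t r \<subset> side N TE s t" using sub by blast
  moreover have "finite (side N TE s t)"
    using side_sub[of N TE s t] n1 tr unfolding is_tree_def by (meson finite_insert finite_subset)
  ultimately show ?thesis by (rule psubset_card_mono[rotated])
qed



lemma EA:
  assumes tr: "is_tree N TE" and uN: "Tu \<subseteq> N" and vN: "Tv \<subseteq> N"
    and cu: "conn TE Tu" and cv: "conn TE Tv" and neu: "Tu \<noteq> {}" and nev: "Tv \<noteq> {}"
    and disj: "Tu \<inter> Tv = {}"
  shows "\<exists>s\<in>N. \<forall>X. X \<subseteq> N \<and> conn TE X \<and> X \<inter> Tu \<noteq> {} \<and> X \<inter> Tv \<noteq> {} \<longrightarrow> s \<in> X"
proof -
  define Q where "Q = (\<lambda>p. {fst p, snd p} \<in> TE \<and> fst p \<in> Tu \<and> Tv \<subseteq> side N TE (fst p) (snd p))"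
  obtain s0 where s0: "s0 \<in> Tu" using neu by blast
  then have "s0 \<notin> Tv" "s0 \<in> N" using disj uN by blast+
  then obtain t0 where "{s0, t0} \<in> TE" "Tv \<subseteq> side N TE s0 t0" using T4[OF tr vN cv nev] by blast
  then have "Q (s0, t0)" using s0 by (simp add: Q_def)
  then obtain p where Qp: "Q p" and minp: "\<forall>q. Q q \<longrightarrow> card (side N TE (fst p) (snd p)) \<le> card (side N TE (fst q) (snd q))"
    using ex_has_least_nat[of Q "(s0, t0)" "\<lambda>p. card (side N TE (fst p) (snd p))"] by blast
  obtain s t where p: "p = (s, t)" by (cases p)
  have e: "{s, t} \<in> TE" and sU: "s \<in> Tu" and vsub: "Tv \<subseteq> side N TE s t" using Qp p by (auto simp: Q_def)
  have sN: "s \<in> N" "t \<in> N" using tree_edge[OF tr e] by auto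
  have tU: "t \<notin> Tu"
  proof
    assume tU: "t \<in> Tu"
    then have "t \<notin> Tv" using disj by blast
    then obtain r where r: "{t, r} \<in> TE" "Tv \<subseteq> side N TE t r" using T4[OF tr vN cv nev] sN by blast
    have rs: "r \<noteq> s"
    proof
      assume "r = s"
      then have "Tv \<subseteq> side N TE t s" using r by simp
      then show False using vsub nev T2[OF tr e] by blast
    qed
    have "Q (t, r)" using r tU by (simp add: Q_def)
    then have "card (side N TE s t) \<le> card (side N TE t r)" using minp p by fastforce
    moreover have "card (side N TE t r) < card (side N TE s t)" using T5[OF tr e r(1) rs] .
    ultimately show False by simp
  qed
  have "\<forall>X. X \<subseteq> N \<and> conn TE X \<and> X \<inter> Tu \<noteq> {} \<and> X \<inter> Tv \<noteq> {} \<longrightarrow> s \<in> X"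
  proof (intro allI impI)
    fix X assume X: "X \<subseteq> N \<and> conn TE X \<and> X \<inter> Tu \<noteq> {} \<and> X \<inter> Tv \<noteq> {}"
    then obtain a b where a: "a \<in> X" "a \<in> Tu" and b: "b \<in> X" "b \<in> Tv" by blast
    have bs: "b \<in> side N TE s t" using b vsub by blast
    have as: "a \<in> side N TE t s"
    proof (rule ccontr)
      assume "a \<notin> side N TE t s"
      then have "a \<in> side N TE s t" using T1[OF tr e] a uN by blast
      moreover have "s \<in> side N TE t s" using self_side sN by blast
      ultimately have "t \<in> Tu" using T3[OF tr e uN cu sU _ a(2)] by blast
      then show False using tU by blast
    qed
    show "s \<in> X" using T3[OF tr e _ _ a(1) as b(1) bs] X by blast
  qed
  then show ?thesis using sN by blast
qed

lemma CL:
  assumes tr: "is_tree N TE"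
    and T: "\<forall>x\<in>C. T x \<subseteq> N \<and> conn TE (T x) \<and> T x \<noteq> {}"
    and pw: "\<forall>x\<in>C. \<forall>y\<in>C. T x \<inter> T y \<noteq> {}"
  shows "\<exists>s\<in>N. \<forall>x\<in>C. s \<in> T x"
proof (rule ccontr)
  assume nc: "\<not> (\<exists>s\<in>N. \<forall>x\<in>C. s \<in> T x)"
  define P where "P = (\<lambda>p. {fst p, snd p} \<in> TE \<and> (\<forall>y\<in>C. T y \<inter> side N TE (fst p) (snd p) \<noteq> {}))"
  have esc: "\<exists>t. P (s, t) \<and> (\<exists>x\<in>C. T x \<subseteq> side N TE s t)" if s: "s \<in> N" for s
  proof -
    obtain x where x: "x \<in> C" "s \<notin> T x" using nc s by blast
    have Tx: "T x \<subseteq> N" "conn TE (T x)" "T x \<noteq> {}" using T x(1) by auto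
    obtain t where t: "{s, t} \<in> TE" "T x \<subseteq> side N TE s t" using T4[OF tr Tx s x(2)] by blast
    have "\<forall>y\<in>C. T y \<inter> side N TE s t \<noteq> {}"
    proof
      fix y assume "y \<in> C"
      then have "T y \<inter> T x \<noteq> {}" using pw x(1) by blast
      then show "T y \<inter> side N TE s t \<noteq> {}" using t(2) by blast
    qed
    then show ?thesis using t x by (auto simp: P_def)
  qed
  have "N \<noteq> {}" using tr unfolding is_tree_def by blast
  then obtain s0 where "s0 \<in> N" by blast
  then obtain t0 where "P (s0, t0)" using esc by blast
  then obtain p where Pp: "P p" and minp: "\<forall>q. P q \<longrightarrow> card (side N TE (fst p) (snd p)) \<le> card (side N TE (fst q) (snd q))"
    using ex_has_least_nat[of P "(s0, t0)" "\<lambda>p. card (side N TE (fst p) (snd p))"] by blast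
  obtain s t where p: "p = (s, t)" by (cases p)
  have e: "{s, t} \<in> TE" and all: "\<forall>y\<in>C. T y \<inter> side N TE s t \<noteq> {}" using Pp p by (auto simp: P_def)
  have tN: "t \<in> N" using tree_edge[OF tr e] by auto
  obtain r x where Pr: "P (t, r)" and x: "x \<in> C" "T x \<subseteq> side N TE t r" using esc[OF tN] by blast
  have e2: "{t, r} \<in> TE" using Pr by (simp add: P_def)
  have rs: "r \<noteq> s"
  proof
    assume "r = s"
    then have "T x \<subseteq> side N TE t s" using x by simp
    moreover have "T x \<inter> side N TE s t \<noteq> {}" using all x(1) by blast
    ultimately show False using T2[OF tr e] by blast
  qed
  have "card (side N TE s t) \<le> card (side N TE t r)" using minp p Pr by fastforce
  moreover have "card (side N TE t r) < card (side N TE s t)" using T5[OF tr e e2 rs] .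
  ultimately show False by simp
qed



lemma is_path_single: "is_path V G [x] \<longleftrightarrow> x \<in> V"
  unfolding is_path_def by simp

lemma is_path_cons2: "is_path V G (x # y # zs) \<longleftrightarrow> x \<in> V \<and> x \<noteq> y \<and> {x, y} \<in> G \<and> is_path V G (y # zs)"
proof
  assume h: "is_path V G (x # y # zs)"
  have "\<forall>i. Suc i < length (y # zs) \<longrightarrow> (y # zs) ! i \<noteq> (y # zs) ! Suc i \<and> {(y # zs) ! i, (y # zs) ! Suc i} \<in> G"
  proof (intro allI impI)
    fix i assume "Suc i < length (y # zs)"
    then have "Suc (Suc i) < length (x # y # zs)" by simp
    then show "(y # zs) ! i \<noteq> (y # zs) ! Suc i \<and> {(y # zs) ! i, (y # zs) ! Suc i} \<in> G"
      using h unfolding is_path_def by (metis nth_Cons_Suc)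
  qed
  moreover have "x \<noteq> y \<and> {x, y} \<in> G" using h unfolding is_path_def by (metis nth_Cons_0 nth_Cons_Suc length_Cons zero_less_Suc Suc_less_eq)
  ultimately show "x \<in> V \<and> x \<noteq> y \<and> {x, y} \<in> G \<and> is_path V G (y # zs)" using h unfolding is_path_def by simp
next
  assume h: "x \<in> V \<and> x \<noteq> y \<and> {x, y} \<in> G \<and> is_path V G (y # zs)"
  have "\<forall>i. Suc i < length (x # y # zs) \<longrightarrow> (x # y # zs) ! i \<noteq> (x # y # zs) ! Suc i \<and> {(x # y # zs) ! i, (x # y # zs) ! Suc i} \<in> G"
  proof (intro allI impI)
    fix i assume i: "Suc i < length (x # y # zs)"
    show "(x # y # zs) ! i \<noteq> (x # y # zs) ! Suc i \<and> {(x # y # zs) ! i, (x # y # zs) ! Suc i} \<in> G"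
    proof (cases i)
      case 0 then show ?thesis using h by simp
    next
      case (Suc j)
      then have "Suc j < length (y # zs)" using i by simp
      then show ?thesis using h Suc unfolding is_path_def by simp
    qed
  qed
  then show "is_path V G (x # y # zs)" using h unfolding is_path_def by simp
qed

lemma path_replace:
  assumes w: "w \<in> V" "w \<notin> S" "{u, w} \<in> G" "{v, w} \<in> G" "w \<noteq> u" "w \<noteq> v"
  shows "is_path V (insert {u, v} G) xs \<Longrightarrow> set xs \<inter> S = {} \<Longrightarrow>
    \<exists>ys. is_path V G ys \<and> hd ys = hd xs \<and> last ys = last xs \<and> set ys \<inter> S = {}"
proof (induction xs)
  case Nil then show ?case by (simp add: is_path_def)
next
  case (Cons x xs)
  show ?case
  proof (cases xs)
    case Nil
    then show ?thesis using Cons.prems by (intro exI[of _ "[x]"]) (simp add: is_path_single)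
  next
    case (Cons y zs)
    have h: "x \<in> V" "x \<noteq> y" "{x, y} \<in> insert {u, v} G" "is_path V (insert {u, v} G) (y # zs)"
      using Cons.prems(1) is_path_cons2[of V _ x y zs] Cons by auto
    have xS: "x \<notin> S" and rS: "set xs \<inter> S = {}" using Cons.prems(2) by auto
    obtain ys where ys: "is_path V G ys" "hd ys = y" "last ys = last xs" "set ys \<inter> S = {}"
      using Cons.IH h(4) rS Cons by auto
    have yne: "ys \<noteq> []" using ys(1) by (simp add: is_path_def)
    then obtain ys' where ysc: "ys = y # ys'" using ys(2) by (cases ys) auto
    show ?thesis
    proof (cases "{x, y} \<in> G")
      case True
      have "is_path V G (x # ys)" using ysc ys(1) h True is_path_cons2 by metis
      then show ?thesis using ys xS yne Cons by (intro exI[of _ "x # ys"]) auto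
    next
      case False
      then have xy: "{x, y} = {u, v}" using h(3) by blast
      have wx: "x \<noteq> w" "y \<noteq> w" using xy w(5,6) by (auto simp: doubleton_eq_iff)
      have e1: "{x, w} \<in> G" and e2: "{w, y} \<in> G" using xy w(3,4) by (auto simp: doubleton_eq_iff insert_commute)
      have "is_path V G (w # ys)" using ysc ys(1) w(1) wx(2) e2 is_path_cons2 by metis
      then have "is_path V G (x # w # ys)" using h(1) wx(1) e1 is_path_cons2 by metis
      then show ?thesis using ys xS yne Cons w(2) by (intro exI[of _ "x # w # ys"]) auto
    qed
  qed
qed



lemma wb_mono:
  assumes "well_behaved lam" "hypergraph H" "S \<subseteq> T" "T \<subseteq> hv H"
  shows "lam H S \<le> lam H T"
proof -
  have "\<forall>H F S T. hypergraph H \<and> hypergraph F \<and> hv H \<subseteq> hv F \<and> he H \<subseteq> he F \<and>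
        S \<subseteq> T \<and> T \<subseteq> hv H \<longrightarrow> lam F S \<le> lam H T" using assms(1) unfolding well_behaved_def by (elim conjE)
  then have "hypergraph H \<and> hypergraph H \<and> hv H \<subseteq> hv H \<and> he H \<subseteq> he H \<and>
        S \<subseteq> T \<and> T \<subseteq> hv H \<longrightarrow> lam H S \<le> lam H T"
    by (rule spec[of _ T, OF spec[of _ S, OF spec[of _ H, OF spec[of _ H]]]])
  then show ?thesis using assms(2-4) by simp
qed

lemma gaifman_sub: "hypergraph H \<Longrightarrow> e \<in> gaifman H \<Longrightarrow> e \<subseteq> hv H"
  unfolding gaifman_def hypergraph_def by blast

lemma sep_inv:
  assumes wb: "well_behaved lam" and hg: "hypergraph H" and SV: "S \<subseteq> hv H" and Sk: "lam H S \<le> of_int k"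
    and sep0: "separator (hv H) (gaifman H) A B S"
    and cl: "(closure_step lam k H)\<^sup>*\<^sup>* (gaifman H) G'"
  shows "(\<forall>e\<in>G'. e \<subseteq> hv H) \<and> separator (hv H) G' A B S"
  using cl
proof (induction rule: rtranclp_induct)
  case base then show ?case using sep0 gaifman_sub[OF hg] by blast
next
  case (step G1 G2)
  obtain u v where uv: "u \<in> hv H" "v \<in> hv H" "u \<noteq> v" "{u, v} \<notin> G1"
      "lam H (nbh G1 u \<inter> nbh G1 v) > of_int k" "G2 = insert {u, v} G1"
    using step(2) unfolding closure_step_def by blast
  have sub2: "\<forall>e\<in>G2. e \<subseteq> hv H" using step(3) uv by auto
  have sep1: "separator (hv H) G1 A B S" using step(3) by blast
  have "\<not> nbh G1 u \<inter> nbh G1 v \<subseteq> S"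
  proof
    assume "nbh G1 u \<inter> nbh G1 v \<subseteq> S"
    then have "lam H (nbh G1 u \<inter> nbh G1 v) \<le> lam H S" using wb_mono[OF wb hg _ SV] by blast
    then show False using uv(5) Sk by simp
  qed
  then obtain w where w: "w \<in> nbh G1 u" "w \<in> nbh G1 v" "w \<notin> S" by blast
  have wG: "{u, w} \<in> G1" "{v, w} \<in> G1" "w \<noteq> u" "w \<noteq> v" using w(1,2) unfolding nbh_def by auto
  have wV: "w \<in> hv H" using wG(1) step(3) by blast
  have "\<forall>xs. is_path (hv H) G2 xs \<and> hd xs \<in> A \<and> last xs \<in> B \<longrightarrow> set xs \<inter> S \<noteq> {}"
  proof (intro allI impI notI)
    fix xs assume xs: "is_path (hv H) G2 xs \<and> hd xs \<in> A \<and> last xs \<in> B" and dis: "set xs \<inter> S = {}"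
    have p2: "is_path (hv H) (insert {u, v} G1) xs" using xs uv(6) by simp
    obtain ys where ys: "is_path (hv H) G1 ys" "hd ys = hd xs" "last ys = last xs" "set ys \<inter> S = {}"
      using path_replace[OF wV w(3) wG p2 dis] by blast
    then show False using sep1 xs unfolding separator_def by auto
  qed
  then show ?case using sub2 sep1 unfolding separator_def by blast
qed

lemma good_td:
  assumes hg: "hypergraph H" and tw: "lambda_tw lam H \<le> of_int k"
  shows "\<exists>N TE bag. tree_decomposition H N TE bag \<and> (\<forall>t\<in>N. lam H (bag t) \<le> of_int k)"
proof -
  define Ws where "Ws = {w. \<exists>N TE bag. tree_decomposition H N TE bag \<and> w = Max ((\<lambda>t. lam H (bag t)) ` N)}"
  have "Ws \<subseteq> (lam H) ` Pow (hv H)"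
  proof
    fix w assume "w \<in> Ws"
    then obtain N TE bag where td: "tree_decomposition H N TE bag" and w: "w = Max ((\<lambda>t. lam H (bag t)) ` N)"
      unfolding Ws_def by blast
    have tr: "is_tree N TE" and bs: "\<forall>t\<in>N. bag t \<subseteq> hv H" using td unfolding tree_decomposition_def by blast+
    have "finite N" "N \<noteq> {}" using tr unfolding is_tree_def by blast+
    then have "w \<in> (\<lambda>t. lam H (bag t)) ` N" using w Max_in by simp
    then obtain t where "t \<in> N" "w = lam H (bag t)" by blast
    then show "w \<in> (lam H) ` Pow (hv H)" using bs by blast
  qed
  moreover have "finite (hv H)" using hg unfolding hypergraph_def by blast
  ultimately have fin: "finite Ws" by (meson finite_imageI finite_Pow_iff finite_subset)
  have cg0: "connected_graph {0::nat} {}" unfolding connected_graph_def by simp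
  have tr0: "is_tree {0} {}" unfolding is_tree_def using cg0 by simp
  have td0: "tree_decomposition H {0} {} (\<lambda>_. hv H)"
    unfolding tree_decomposition_def
  proof (intro conjI ballI)
    show "is_tree {0} {}" by (rule tr0)
  next
    fix t :: nat show "hv H \<subseteq> hv H" by simp
  next
    fix x assume "x \<in> hv H"
    then have eq: "{t \<in> {0::nat}. x \<in> hv H} = {0}" by simp
    show "{t \<in> {0::nat}. x \<in> hv H} \<noteq> {}" unfolding eq by simp
    show "connected_graph {t \<in> {0::nat}. x \<in> hv H} {e \<in> {}. e \<subseteq> {t \<in> {0}. x \<in> hv H}}"
      unfolding eq using cg0 by simp
  next
    fix e assume "e \<in> gaifman H"
    then have "e \<subseteq> hv H" by (rule gaifman_sub[OF hg])
    then show "\<exists>t\<in>{0::nat}. e \<subseteq> hv H" by simp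
  qed
  have "Max ((\<lambda>t. lam H ((\<lambda>_. hv H) t)) ` {0::nat}) \<in> Ws" unfolding Ws_def using td0 by blast
  then have ne: "Ws \<noteq> {}" by blast
  have "Inf Ws \<in> Ws" using cInf_eq_Min[OF fin ne] Min_in[OF fin ne] by simp
  then obtain N TE bag where td: "tree_decomposition H N TE bag" and w: "Inf Ws = Max ((\<lambda>t. lam H (bag t)) ` N)"
    unfolding Ws_def by blast
  have "is_tree N TE" using td unfolding tree_decomposition_def by blast
  then have finN: "finite N" unfolding is_tree_def by blast
  have eqI: "Inf Ws = lambda_tw lam H" unfolding Ws_def lambda_tw_def by (rule refl)
  have "\<forall>t\<in>N. lam H (bag t) \<le> of_int k"
  proof
    fix t assume t: "t \<in> N"
    have "lam H (bag t) \<le> Max ((\<lambda>t. lam H (bag t)) ` N)" using finN t by simp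
    then show "lam H (bag t) \<le> of_int k" using w eqI tw by simp
  qed
  then show ?thesis using td by blast
qed



lemma edge_inv:
  assumes wb: "well_behaved lam" and hg: "hypergraph H" and td: "tree_decomposition H N TE bag"
    and wk: "\<forall>t\<in>N. lam H (bag t) \<le> of_int k"
    and cl: "(closure_step lam k H)\<^sup>*\<^sup>* (gaifman H) G'"
  shows "\<forall>e\<in>G'. \<exists>t\<in>N. e \<subseteq> bag t"
  using cl
proof (induction rule: rtranclp_induct)
  case base then show ?case using td unfolding tree_decomposition_def by blast
next
  case (step G1 G2)
  have tr: "is_tree N TE" and bs: "\<forall>t\<in>N. bag t \<subseteq> hv H"
    and cT: "\<forall>x\<in>hv H. {t\<in>N. x \<in> bag t} \<noteq> {} \<and> conn TE {t\<in>N. x \<in> bag t}"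
    using td unfolding tree_decomposition_def by blast+
  obtain u v where uv: "u \<in> hv H" "v \<in> hv H" "u \<noteq> v" "{u, v} \<notin> G1"
      "lam H (nbh G1 u \<inter> nbh G1 v) > of_int k" "G2 = insert {u, v} G1"
    using step(2) unfolding closure_step_def by blast
  have "\<exists>t\<in>N. {u, v} \<subseteq> bag t"
  proof (rule ccontr)
    assume nb: "\<not> (\<exists>t\<in>N. {u, v} \<subseteq> bag t)"
    have disj: "{t\<in>N. u \<in> bag t} \<inter> {t\<in>N. v \<in> bag t} = {}" using nb by blast
    have cu: "{t\<in>N. u \<in> bag t} \<noteq> {}" "conn TE {t\<in>N. u \<in> bag t}" using cT uv(1) by blast+
    have cv: "{t\<in>N. v \<in> bag t} \<noteq> {}" "conn TE {t\<in>N. v \<in> bag t}" using cT uv(2) by blast+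
    obtain s where sN: "s \<in> N" and sX: "\<forall>X. X \<subseteq> N \<and> conn TE X \<and> X \<inter> {t\<in>N. u \<in> bag t} \<noteq> {}
         \<and> X \<inter> {t\<in>N. v \<in> bag t} \<noteq> {} \<longrightarrow> s \<in> X"
      using EA[OF tr _ _ cu(2) cv(2) cu(1) cv(1) disj] by blast
    have "nbh G1 u \<inter> nbh G1 v \<subseteq> bag s"
    proof
      fix w assume w: "w \<in> nbh G1 u \<inter> nbh G1 v"
      then have e1: "{u, w} \<in> G1" and e2: "{v, w} \<in> G1" unfolding nbh_def by auto
      obtain t1 where t1: "t1 \<in> N" "{u, w} \<subseteq> bag t1" using step(3) e1 by blast
      obtain t2 where t2: "t2 \<in> N" "{v, w} \<subseteq> bag t2" using step(3) e2 by blast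
      have wV: "w \<in> hv H" using t1 bs by blast
      have cw: "conn TE {t\<in>N. w \<in> bag t}" using cT wV by blast
      have "{t\<in>N. w \<in> bag t} \<subseteq> N" by blast
      moreover have "{t\<in>N. w \<in> bag t} \<inter> {t\<in>N. u \<in> bag t} \<noteq> {}" using t1 by blast
      moreover have "{t\<in>N. w \<in> bag t} \<inter> {t\<in>N. v \<in> bag t} \<noteq> {}" using t2 by blast
      ultimately have "s \<in> {t\<in>N. w \<in> bag t}" using sX cw by blast
      then show "w \<in> bag s" by blast
    qed
    then have "lam H (nbh G1 u \<inter> nbh G1 v) \<le> lam H (bag s)" using wb_mono[OF wb hg] bs sN by blast
    then show False using wk sN uv(5) by force
  qed
  then show ?case using step(3) uv(6) by blast
qed

theorem mainTheorem18:
  fixes lam :: "'a width_measure" and k :: int and H :: "'a hypergraph" and G :: "'a set set"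
  assumes "well_behaved lam"
    and "hypergraph H"
    and "lambda_tw lam H \<le> of_int k"
    and "is_closure lam k H G"
  shows "(\<forall>C. is_clique (hv H) G C \<longrightarrow> lam H C \<le> of_int k) \<and>
         (\<forall>A B S. S \<subseteq> hv H \<longrightarrow> separator (hv H) (gaifman H) A B S \<longrightarrow> lam H S \<le> of_int k \<longrightarrow>
             separator (hv H) G A B S)"
proof
  have cl: "(closure_step lam k H)\<^sup>*\<^sup>* (gaifman H) G" using assms(4) unfolding is_closure_def by blast
  obtain N TE bag where td: "tree_decomposition H N TE bag" and wk: "\<forall>t\<in>N. lam H (bag t) \<le> of_int k"
    using good_td[OF assms(2,3)] by blast
  have tr: "is_tree N TE" and bs: "\<forall>t\<in>N. bag t \<subseteq> hv H"
    and cT: "\<forall>x\<in>hv H. {t\<in>N. x \<in> bag t} \<noteq> {} \<and> conn TE {t\<in>N. x \<in> bag t}"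
    using td unfolding tree_decomposition_def by blast+
  have inG: "\<forall>e\<in>G. \<exists>t\<in>N. e \<subseteq> bag t" using edge_inv[OF assms(1,2) td wk cl] .
  show "\<forall>C. is_clique (hv H) G C \<longrightarrow> lam H C \<le> of_int k"
  proof (intro allI impI)
    fix C assume "is_clique (hv H) G C"
    then have CV: "C \<subseteq> hv H" and Ce: "\<forall>u\<in>C. \<forall>v\<in>C. u \<noteq> v \<longrightarrow> {u, v} \<in> G"
      unfolding is_clique_def by blast+
    have T: "\<forall>x\<in>C. {t\<in>N. x \<in> bag t} \<subseteq> N \<and> conn TE {t\<in>N. x \<in> bag t} \<and> {t\<in>N. x \<in> bag t} \<noteq> {}"
      using cT CV by blast
    have pw: "\<forall>x\<in>C. \<forall>y\<in>C. {t\<in>N. x \<in> bag t} \<inter> {t\<in>N. y \<in> bag t} \<noteq> {}"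
    proof (intro ballI)
      fix x y assume x: "x \<in> C" and y: "y \<in> C"
      show "{t\<in>N. x \<in> bag t} \<inter> {t\<in>N. y \<in> bag t} \<noteq> {}"
      proof (cases "x = y")
        case True then show ?thesis using T x by auto
      next
        case False
        then have "{x, y} \<in> G" using Ce x y by blast
        then obtain t where "t \<in> N" "{x, y} \<subseteq> bag t" using inG by blast
        then show ?thesis by blast
      qed
    qed
    obtain s where sN: "s \<in> N" and sC: "\<forall>x\<in>C. s \<in> {t\<in>N. x \<in> bag t}"
      using CL[OF tr T pw] by blast
    have "C \<subseteq> bag s" using sC by blast
    then have "lam H C \<le> lam H (bag s)" using wb_mono[OF assms(1,2)] bs sN by blast
    then show "lam H C \<le> of_int k" using wk sN by force
  qed
next
  have cl: "(closure_step lam k H)\<^sup>*\<^sup>* (gaifman H) G" using assms(4) unfolding is_closure_def by blast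
  show "\<forall>A B S. S \<subseteq> hv H \<longrightarrow> separator (hv H) (gaifman H) A B S \<longrightarrow> lam H S \<le> of_int k \<longrightarrow>
             separator (hv H) G A B S"
    using sep_inv[OF assms(1,2) _ _ _ cl] by blast
qed


end
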